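(* Assume the setting described in the context. Let $Q,R\in\mathcal{D}$ with $Q\subset Q^*$, $\ell(Q)=2^i\ell(R)$, $d(Q,R)>\ell(R)^\gamma\ell(Q)^{1-\gamma}$ and $D(Q,R)/\ell(Q)\sim 2^j$ for some integers $i\ge0$, $j\ge0$. Let $(x,t)\in W_R$ and $S=Q^{(j+\theta(i+j))}$. Then for every $f\in L^1_{loc}(\mu)$, $$\left(\int_{\mathbb{R}^n}|\theta_t(\Delta_Q f)(y)|^2\Big(\frac{t}{t+|x-y|}\Big)^{m\lambda}\frac{d\mu(y)}{t^m}\right)^{1/2}\le C\,2^{-\frac{\alpha}{4}(i+j)}\,\ell(S)^{-m}\,\|\Delta_Q f\|_{L^1(\mu)},$$ where $C$ is independent of $Q,R,i,j,x,t,f$.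
   Context: Measure and kernel: $n\ge1$, $m>0$; $\mu$ is a Borel measure on $\mathbb{R}^n$ with $\mu(B(x,r))\le C r^m$ for all $x$, $r>0$; distances, balls and cubes use the $\ell^\infty$ metric $|x-y|=\max_i|x_i-y_i|$. Fix $\lambda>2$ and $0<\alpha\le m(\lambda-2)/2$. The kernel $s_t:\mathbb{R}^n\times\mathbb{R}^n\to\mathbb{C}$ ($t>0$) satisfies $|s_t(x,y)|\le C t^\alpha/(t+|x-y|)^{m+\alpha}$ and $|s_t(x,y)-s_t(x,y')|\le C|y-y'|^\alpha/(t+|x-y|)^{m+\alpha}$ whenever $|y-y'|<t/2$; $\theta_t f(y)=\int s_t(y,z)f(z)\,d\mu(z)$. Dyadic grid: for a fixed sequence $\beta=(\beta_j)_{j\in\mathbb{Z}}$, $\beta_j\in\{0,1\}^n$, let $\mathcal{D}=\bigcup_{k\in\mathbb{Z}}\mathcal{D}_k$, $\mathcal{D}_k=\{2^k([0,1)^n+v)+\sum_{j<k}2^j\beta_j: v\in\mathbb{Z}^n\}$. For $Q\in\mathcal{D}$, $\ell(Q)$ is its side length, $\operatorname{ch}(Q)$ its $2^n$ dyadic children, and $Q^{(k)}$ the unique cube of $\mathcal{D}$ with $\ell(Q^{(k)})=2^k\ell(Q)$ and $Q\subset Q^{(k)}$. Fix an integer $r\ge1$ and $\gamma\in(0,1/2)$ with $\gamma\le \frac{\alpha}{2(m+\alpha)}$ and $\frac{m\gamma}{1-\gamma}\le\frac{\alpha}{4}$. $d(Q,R)$ is the distance between cubes $Q,R$, $D(Q,R)=\ell(Q)+\ell(R)+d(Q,R)$,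 and "$A\sim 2^j$" means $2^j<A\le 2^{j+1}$. $\theta(j)=\lceil (j\gamma+r)/(1-\gamma)\rceil$ (smallest integer $\ge$ the number). $W_R=R\times(\ell(R)/2,\ell(R)]$. Twisted martingale differences: let $1<p\le2$, $p'=p/(p-1)$. For each cube $Q$ let $b_Q$ satisfy $\operatorname{supp}b_Q\subset Q$, $\langle b_Q\rangle_Q=1$ and $\|b_Q\|^p_{L^p(\mu)}\le A\mu(Q)$, where $\langle h\rangle_Q=\mu(Q)^{-1}\int_Q h\,d\mu$ and $A$ is a fixed constant. Fix $s\in\mathbb{Z}$ and $Q^*\in\mathcal{D}$ with $\ell(Q^* )=2^s$. Stopping cubes: $\mathcal{F}^0=\{Q^*\}$; given $\mathcal{F}^j$, $\mathcal{F}^{j+1}$ consists, for each $F\in\mathcal{F}^j$, of the maximal cubes $Q\in\mathcal{D}$, $Q\subsetneq F$, with $|\langle b_F\rangle_Q|<1/2$ or $\langle|b_F|^p\rangle_Q>2^{p'+1}A^{p'}$; $\mathcal{F}_{Q^*}=\bigcup_j\mathcal{F}^j$. For $Q\in\mathcal{D}$, $Q\subset Q^*$, $Q^a$ is the minimal $F\in\mathcal{F}_{Q^*}$ with $Q\subset F$. For $f\in L^1_{loc}(\mu)$ and $Q\subset Q^*$, $$\Delta_Q f=\sum_{Q'\in\operatorname{ch}(Q)}\Big[\frac{\langle f\rangle_{Q'}}{\langle b_{(Q')^a}\rangle_{Q'}}b_{(Q')^a}-\frac{\langle f\rangle_Q}{\langle b_{Q^a}\rangle_Q}b_{Q^a}\Big]\mathbf{1}_{Q'},$$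 except that for $Q=Q^*$ one adds the term $\langle f\rangle_{Q^*}b_{Q^*}$. *)

theory Defs
  imports "HOL-Analysis.Analysis"
begin

definition linf :: "real^'n \<Rightarrow> real^'n \<Rightarrow> real" where
  "linf x y = Max (range (\<lambda>i. \<bar>x$i - y$i\<bar>))"

definition linf_ball :: "real^'n \<Rightarrow> real \<Rightarrow> (real^'n) set" where
  "linf_ball x r = {y. linf x y < r}"

text \<open>shift k = sum over j < k of 2^j beta_j (convergent series)\<close>
definition dshift :: "(int \<Rightarrow> real^'n) \<Rightarrow> int \<Rightarrow> real^'n" where
  "dshift \<beta> k = (\<Sum>l. ((2::real) powr (real_of_int k - 1 - real l)) *\<^sub>R \<beta> (k - 1 - int l))"

definition dcube :: "(int \<Rightarrow> real^'n) \<Rightarrow> int \<Rightarrow> int^'n \<Rightarrow> (real^'n) set" where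
  "dcube \<beta> k v = {x. \<forall>i. 2 powr real_of_int k * real_of_int (v$i) + dshift \<beta> k $ i \<le> x$i
                        \<and> x$i < 2 powr real_of_int k * (real_of_int (v$i) + 1) + dshift \<beta> k $ i}"

definition Dk :: "(int \<Rightarrow> real^'n) \<Rightarrow> int \<Rightarrow> (real^'n) set set" where
  "Dk \<beta> k = range (dcube \<beta> k)"

definition Dgrid :: "(int \<Rightarrow> real^'n) \<Rightarrow> (real^'n) set set" where
  "Dgrid \<beta> = (\<Union>k. Dk \<beta> k)"

definition dlev :: "(int \<Rightarrow> real^'n) \<Rightarrow> (real^'n) set \<Rightarrow> int" where
  "dlev \<beta> Q = (THE k. Q \<in> Dk \<beta> k)"

definition side :: "(int \<Rightarrow> real^'n) \<Rightarrow> (real^'n) set \<Rightarrow> real" where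
  "side \<beta> Q = 2 powr real_of_int (dlev \<beta> Q)"

definition dchildren :: "(int \<Rightarrow> real^'n) \<Rightarrow> (real^'n) set \<Rightarrow> (real^'n) set set" where
  "dchildren \<beta> Q = {Q' \<in> Dk \<beta> (dlev \<beta> Q - 1). Q' \<subseteq> Q}"

definition danc :: "(int \<Rightarrow> real^'n) \<Rightarrow> (real^'n) set \<Rightarrow> int \<Rightarrow> (real^'n) set" where
  "danc \<beta> Q k = (THE S. S \<in> Dk \<beta> (dlev \<beta> Q + k) \<and> Q \<subseteq> S)"

definition setdist_inf :: "(real^'n) set \<Rightarrow> (real^'n) set \<Rightarrow> real" where
  "setdist_inf Q R = Inf {linf x y | x y. x \<in> Q \<and> y \<in> R}"

definition longdist :: "(int \<Rightarrow> real^'n) \<Rightarrow> (real^'n) set \<Rightarrow> (real^'n) set \<Rightarrow> real" where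
  "longdist \<beta> Q R = side \<beta> Q + side \<beta> R + setdist_inf Q R"

definition thetafun :: "real \<Rightarrow> nat \<Rightarrow> nat \<Rightarrow> int" where
  "thetafun \<gamma> r j = \<lceil>(real j * \<gamma> + real r) / (1 - \<gamma>)\<rceil>"

definition avg :: "(real^'n) measure \<Rightarrow> (real^'n) set \<Rightarrow> (real^'n \<Rightarrow> complex) \<Rightarrow> complex" where
  "avg M Q h = (\<integral>x\<in>Q. h x \<partial>M) / complex_of_real (measure M Q)"

definition ravg :: "(real^'n) measure \<Rightarrow> (real^'n) set \<Rightarrow> (real^'n \<Rightarrow> real) \<Rightarrow> real" where
  "ravg M Q h = (\<integral>x\<in>Q. h x \<partial>M) / measure M Q"

definition theta_op :: "(real^'n) measure \<Rightarrow> (real \<Rightarrow> real^'n \<Rightarrow> real^'n \<Rightarrow> complex) \<Rightarrow> real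
     \<Rightarrow> (real^'n \<Rightarrow> complex) \<Rightarrow> real^'n \<Rightarrow> complex" where
  "theta_op M s t g y = (\<integral>z. s t y z * g z \<partial>M)"

definition stopcond :: "(real^'n) measure \<Rightarrow> ((real^'n) set \<Rightarrow> real^'n \<Rightarrow> complex) \<Rightarrow> real \<Rightarrow> real
      \<Rightarrow> (real^'n) set \<Rightarrow> (real^'n) set \<Rightarrow> bool" where
  "stopcond M b A p F Q \<longleftrightarrow>
     cmod (avg M Q (b F)) < 1/2 \<or>
     ravg M Q (\<lambda>x. cmod (b F x) powr p) > 2 powr (p/(p-1) + 1) * A powr (p/(p-1))"

definition stopchildren :: "(int \<Rightarrow> real^'n) \<Rightarrow> (real^'n) measure \<Rightarrow> ((real^'n) set \<Rightarrow> real^'n \<Rightarrow> complex)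
      \<Rightarrow> real \<Rightarrow> real \<Rightarrow> (real^'n) set \<Rightarrow> (real^'n) set set" where
  "stopchildren \<beta> M b A p F = {Q \<in> Dgrid \<beta>. Q \<subset> F \<and> stopcond M b A p F Q \<and>
      (\<forall>Q' \<in> Dgrid \<beta>. Q \<subseteq> Q' \<and> Q' \<subset> F \<and> stopcond M b A p F Q' \<longrightarrow> Q' = Q)}"

fun stopgen :: "(int \<Rightarrow> real^'n) \<Rightarrow> (real^'n) measure \<Rightarrow> ((real^'n) set \<Rightarrow> real^'n \<Rightarrow> complex)
      \<Rightarrow> real \<Rightarrow> real \<Rightarrow> (real^'n) set \<Rightarrow> nat \<Rightarrow> (real^'n) set set" where
  "stopgen \<beta> M b A p Qs 0 = {Qs}"
| "stopgen \<beta> M b A p Qs (Suc j) = (\<Union>F \<in> stopgen \<beta> M b A p Qs j. stopchildren \<beta> M b A p F)"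

definition stopfam :: "(int \<Rightarrow> real^'n) \<Rightarrow> (real^'n) measure \<Rightarrow> ((real^'n) set \<Rightarrow> real^'n \<Rightarrow> complex)
      \<Rightarrow> real \<Rightarrow> real \<Rightarrow> (real^'n) set \<Rightarrow> (real^'n) set set" where
  "stopfam \<beta> M b A p Qs = (\<Union>j. stopgen \<beta> M b A p Qs j)"

definition stopparent :: "(int \<Rightarrow> real^'n) \<Rightarrow> (real^'n) measure \<Rightarrow> ((real^'n) set \<Rightarrow> real^'n \<Rightarrow> complex)
      \<Rightarrow> real \<Rightarrow> real \<Rightarrow> (real^'n) set \<Rightarrow> (real^'n) set \<Rightarrow> (real^'n) set" where
  "stopparent \<beta> M b A p Qs Q = (THE F. F \<in> stopfam \<beta> M b A p Qs \<and> Q \<subseteq> F \<and>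
      (\<forall>F' \<in> stopfam \<beta> M b A p Qs. Q \<subseteq> F' \<longrightarrow> F \<subseteq> F'))"

definition Delta :: "(int \<Rightarrow> real^'n) \<Rightarrow> (real^'n) measure \<Rightarrow> ((real^'n) set \<Rightarrow> real^'n \<Rightarrow> complex)
      \<Rightarrow> real \<Rightarrow> real \<Rightarrow> (real^'n) set \<Rightarrow> (real^'n) set \<Rightarrow> (real^'n \<Rightarrow> complex) \<Rightarrow> real^'n \<Rightarrow> complex" where
  "Delta \<beta> M b A p Qs Q f x =
     (\<Sum>Q' \<in> dchildren \<beta> Q.
        (avg M Q' f / avg M Q' (b (stopparent \<beta> M b A p Qs Q')) * b (stopparent \<beta> M b A p Qs Q') x
         - avg M Q f / avg M Q (b (stopparent \<beta> M b A p Qs Q)) * b (stopparent \<beta> M b A p Qs Q) x)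
        * indicator Q' x)
     + (if Q = Qs then avg M Qs f * b Qs x else 0)"

end

theory Submission
  imports Defs
begin


lemma dshift_summable:
  fixes \<beta> :: "int \<Rightarrow> real^'n"
  assumes b01: "\<And>j i. \<beta> j $ i \<in> {0, 1}"
  shows "summable (\<lambda>l. ((2::real) powr (real_of_int k - 1 - real l)) *\<^sub>R \<beta> (k - 1 - int l))"
proof (rule summable_comparison_test)
  have nb: "norm (\<beta> j) \<le> real CARD('n)" for j
  proof -
    have "norm (\<beta> j) \<le> (\<Sum>i\<in>UNIV. \<bar>\<beta> j $ i\<bar>)" by (rule norm_le_l1_cart)
    also have "\<dots> \<le> (\<Sum>i\<in>(UNIV::'n set). 1)"
    proof (rule sum_mono)
      fix i show "\<bar>\<beta> j $ i\<bar> \<le> 1" using b01[of j i] by auto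
    qed
    finally show ?thesis by simp
  qed
  show "\<exists>N. \<forall>n\<ge>N. norm (((2::real) powr (real_of_int k - 1 - real n)) *\<^sub>R \<beta> (k - 1 - int n))
      \<le> real CARD('n) * 2 powr (real_of_int k - 1) * (1/2)^n"
  proof (intro exI allI impI)
    fix n :: nat
    have e: "(2::real) powr (real_of_int k - 1 - real n) = 2 powr (real_of_int k - 1) * (1/2)^n"
      by (simp add: powr_diff powr_realpow power_one_over divide_simps)
    show "norm (((2::real) powr (real_of_int k - 1 - real n)) *\<^sub>R \<beta> (k - 1 - int n))
      \<le> real CARD('n) * 2 powr (real_of_int k - 1) * (1/2)^n"
      unfolding e using nb[of "k - 1 - int n"]
      by (simp add: mult.commute mult.left_commute mult_left_mono)
  qed
  show "summable (\<lambda>n. real CARD('n) * 2 powr (real_of_int k - 1) * (1/2::real)^n)"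
    by (intro summable_mult summable_geometric) simp
qed

lemma dshift_step:
  fixes \<beta> :: "int \<Rightarrow> real^'n"
  assumes b01: "\<And>j i. \<beta> j $ i \<in> {0, 1}"
  shows "dshift \<beta> (k + 1) = dshift \<beta> k + (2 powr real_of_int k) *\<^sub>R \<beta> k"
proof -
  let ?g = "\<lambda>l. ((2::real) powr (real_of_int (k+1) - 1 - real l)) *\<^sub>R \<beta> (k + 1 - 1 - int l)"
  have s: "summable ?g" using dshift_summable[where \<beta>=\<beta> and k="k+1", OF b01] by simp
  have "(\<Sum>l. ?g (Suc l)) = suminf ?g - ?g 0" by (rule suminf_split_head[OF s])
  moreover have "(\<lambda>l. ?g (Suc l)) = (\<lambda>l. ((2::real) powr (real_of_int k - 1 - real l)) *\<^sub>R \<beta> (k - 1 - int l))"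
    by (auto simp: algebra_simps)
  ultimately show ?thesis unfolding dshift_def by (simp add: algebra_simps)
qed

lemma dcube_corner:
  "(\<chi> i. 2 powr real_of_int k * real_of_int (v$i) + dshift \<beta> k $ i) \<in> dcube \<beta> k v"
  unfolding dcube_def by (auto simp: algebra_simps)

lemma dcube_nonempty: "dcube \<beta> k v \<noteq> {}"
  using dcube_corner by blast

lemma int_interval_eq:
  fixes P y :: real and a b :: int
  assumes P: "P > 0" and "P * a \<le> y" "y < P * (a + 1)" "P * b \<le> y" "y < P * (b + 1)"
  shows "a = b"
proof -
  have "P * a < P * (b+1)" using assms by linarith
  hence "a < b + 1" using P by (simp add: mult_less_cancel_left_pos del: of_int_add)
  moreover have "P * b < P * (a+1)" using assms by linarith
  hence "b < a + 1" using P by (simp add: mult_less_cancel_left_pos del: of_int_add)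
  ultimately show ?thesis by linarith
qed

lemma dcube_same_level:
  assumes "x \<in> dcube \<beta> k v" "x \<in> dcube \<beta> k w"
  shows "v = w"
proof -
  have "v $ i = w $ i" for i
  proof (rule int_interval_eq[where P="2 powr real_of_int k" and y="x$i - dshift \<beta> k $ i"])
    show "2 powr real_of_int k * real_of_int (v $ i) \<le> x $ i - dshift \<beta> k $ i"
         "x $ i - dshift \<beta> k $ i < 2 powr real_of_int k * real_of_int (v $ i + 1)"
         "2 powr real_of_int k * real_of_int (w $ i) \<le> x $ i - dshift \<beta> k $ i"
         "x $ i - dshift \<beta> k $ i < 2 powr real_of_int k * real_of_int (w $ i + 1)"
      using assms unfolding dcube_def by (auto simp: algebra_simps)
  qed simp
  thus ?thesis by (simp add: vec_eq_iff)
qed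

lemma dcube_level_unique:
  assumes "dcube \<beta> k v = dcube \<beta> k' v'"
  shows "k = k'"
proof (rule ccontr)
  assume ne: "k \<noteq> k'"
  define c where "c = (\<chi> i. 2 powr real_of_int k * real_of_int (v$i) + dshift \<beta> k $ i)"
  define c' where "c' = (\<chi> i. 2 powr real_of_int k' * real_of_int (v'$i) + dshift \<beta> k' $ i)"
  have cin: "c \<in> dcube \<beta> k' v'" using dcube_corner[of k v \<beta>] assms c_def by simp
  have cin': "c' \<in> dcube \<beta> k v" using dcube_corner[of k' v' \<beta>] assms c'_def by simp
  have ceq: "c $ i = c' $ i" for i
    using cin cin' unfolding dcube_def c_def c'_def by (auto intro: order.antisym)
  have main: "False" if lt: "ka < kb" and eqc: "\<And>i. c1 $ i = c2 $ i"
     and c1: "c1 = (\<chi> i. 2 powr real_of_int ka * real_of_int (va$i) + dshift \<beta> ka $ i)"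
     and c2: "c2 = (\<chi> i. 2 powr real_of_int kb * real_of_int (vb$i) + dshift \<beta> kb $ i)"
     and eq: "dcube \<beta> ka va = dcube \<beta> kb vb" for ka kb va vb c1 c2
  proof -
    define q where "q = (\<chi> i. c1 $ i + 2 powr real_of_int ka)"
    have pl: "(2::real) powr real_of_int ka < 2 powr real_of_int kb" using lt by simp
    have "q \<in> dcube \<beta> kb vb" unfolding dcube_def q_def
      using eqc pl by (auto simp: c1 c2 algebra_simps)
    moreover have "q \<notin> dcube \<beta> ka va" unfolding dcube_def q_def
      by (auto simp: c1 algebra_simps)
    ultimately show False using eq by simp
  qed
  show False
  proof (cases "k < k'")
    case True thus ?thesis using main[OF True ceq c_def c'_def assms] by blast
  next
    case False hence "k' < k" using ne by simp
    thus ?thesis using main[of k' k c' c, OF _ _ c'_def c_def] ceq assms by metis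
  qed
qed

lemma dcube_nest1:
  fixes \<beta> :: "int \<Rightarrow> real^'n"
  assumes b01: "\<And>j i. \<beta> j $ i \<in> {0, 1}"
  shows "\<exists>u. dcube \<beta> k v \<subseteq> dcube \<beta> (k+1) u"
proof -
  define bi where "bi i = (if \<beta> k $ i = 1 then 1 else 0 :: int)" for i
  have bb: "\<beta> k $ i = real_of_int (bi i)" for i using b01[of k i] by (auto simp: bi_def)
  define u where "u = (\<chi> i. (v$i - bi i) div 2)"
  have sh: "dshift \<beta> (k+1) $ i = dshift \<beta> k $ i + 2 powr real_of_int k * real_of_int (bi i)" for i
    using dshift_step[where \<beta>=\<beta> and k=k, OF b01] bb by simp
  have p2: "(2::real) powr real_of_int (k+1) = 2 * 2 powr real_of_int k"
    by (simp add: powr_add)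
  show ?thesis
  proof (rule exI[of _ u], rule subsetI)
    fix x assume x: "x \<in> dcube \<beta> k v"
    show "x \<in> dcube \<beta> (k+1) u" unfolding dcube_def
    proof (intro CollectI allI)
      fix i
      define P where "P = (2::real) powr real_of_int k"
      define e where "e = (v$i - bi i) mod 2"
      have ve: "v$i = 2 * (u$i) + e + bi i" unfolding u_def e_def by simp
      have e01: "e = 0 \<or> e = 1" unfolding e_def by auto
      have P: "P > 0" unfolding P_def by simp
      have xl: "P * real_of_int (v$i) + dshift \<beta> k $ i \<le> x$i"
        and xu: "x$i < P * (real_of_int (v$i) + 1) + dshift \<beta> k $ i"
        using x unfolding dcube_def P_def by auto
      have rv: "real_of_int (v$i) = 2 * real_of_int (u$i) + real_of_int e + real_of_int (bi i)"
        using ve by simp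
      have "2 * P * real_of_int (u$i) + (dshift \<beta> k $ i + P * real_of_int (bi i)) \<le> x$i
          \<and> x$i < 2 * P * (real_of_int (u$i) + 1) + (dshift \<beta> k $ i + P * real_of_int (bi i))"
        using e01
      proof
        assume "e = 0" thus ?thesis using xl xu rv by (simp add: algebra_simps)
      next
        assume "e = 1" thus ?thesis using xl xu rv P by (simp add: algebra_simps)
      qed
      thus "2 powr real_of_int (k + 1) * real_of_int (u $ i) + dshift \<beta> (k + 1) $ i \<le> x $ i \<and>
        x $ i < 2 powr real_of_int (k + 1) * (real_of_int (u $ i) + 1) + dshift \<beta> (k + 1) $ i"
        unfolding p2 sh P_def by simp
    qed
  qed
qed

lemma dcube_nest:
  fixes \<beta> :: "int \<Rightarrow> real^'n"
  assumes b01: "\<And>j i. \<beta> j $ i \<in> {0, 1}"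
  shows "\<exists>u. dcube \<beta> k v \<subseteq> dcube \<beta> (k + int K) u"
proof (induction K)
  case 0 show ?case by auto
next
  case (Suc K)
  then obtain u where u: "dcube \<beta> k v \<subseteq> dcube \<beta> (k + int K) u" by blast
  obtain w where w: "dcube \<beta> (k + int K) u \<subseteq> dcube \<beta> (k + int K + 1) w"
    using dcube_nest1[where \<beta>=\<beta>, OF b01] by blast
  have eq: "k + int (Suc K) = k + int K + 1" by simp
  have "dcube \<beta> k v \<subseteq> dcube \<beta> (k + int K + 1) w" using u w by blast
  thus ?case unfolding eq by blast
qed

lemma Dk_dlev: "Q \<in> Dk \<beta> k \<Longrightarrow> dlev \<beta> Q = k"
  unfolding dlev_def Dk_def
  by (rule the_equality) (auto dest: dcube_level_unique)

lemma Dgrid_Dk: "Q \<in> Dgrid \<beta> \<Longrightarrow> Q \<in> Dk \<beta> (dlev \<beta> Q)"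
  unfolding Dgrid_def using Dk_dlev by fastforce

lemma Dk_Dgrid: "Q \<in> Dk \<beta> k \<Longrightarrow> Q \<in> Dgrid \<beta>"
  unfolding Dgrid_def by blast

lemma Dk_side: "Q \<in> Dk \<beta> k \<Longrightarrow> side \<beta> Q = 2 powr real_of_int k"
  unfolding side_def by (simp add: Dk_dlev)

lemma Dk_nonempty: "Q \<in> Dk \<beta> k \<Longrightarrow> Q \<noteq> {}"
  unfolding Dk_def using dcube_nonempty by blast

lemma Dk_same: "P \<in> Dk \<beta> k \<Longrightarrow> F \<in> Dk \<beta> k \<Longrightarrow> P \<inter> F \<noteq> {} \<Longrightarrow> P = F"
  unfolding Dk_def using dcube_same_level by blast

lemma Dk_nest:
  fixes \<beta> :: "int \<Rightarrow> real^'n"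
  assumes b01: "\<And>j i. \<beta> j $ i \<in> {0, 1}"
    and P: "P \<in> Dk \<beta> k" and kk: "k \<le> k'"
  shows "\<exists>F \<in> Dk \<beta> k'. P \<subseteq> F"
proof -
  obtain v where v: "P = dcube \<beta> k v" using P unfolding Dk_def by blast
  have "k' = k + int (nat (k' - k))" using kk by simp
  then obtain u where "dcube \<beta> k v \<subseteq> dcube \<beta> k' u"
    using dcube_nest[where \<beta>=\<beta> and k=k and v=v and K="nat (k'-k)", OF b01] by metis
  thus ?thesis using v unfolding Dk_def by blast
qed

lemma Dk_nested:
  fixes \<beta> :: "int \<Rightarrow> real^'n"
  assumes b01: "\<And>j i. \<beta> j $ i \<in> {0, 1}"
    and P: "P \<in> Dk \<beta> k" and F: "F \<in> Dk \<beta> k'" and kk: "k \<le> k'" and ne: "P \<inter> F \<noteq> {}"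
  shows "P \<subseteq> F"
proof -
  obtain G where G: "G \<in> Dk \<beta> k'" "P \<subseteq> G" using Dk_nest[where \<beta>=\<beta>, OF b01 P kk] by blast
  have "G = F" using Dk_same[OF G(1) F] ne G(2) by blast
  thus ?thesis using G by simp
qed

lemma danc_props:
  fixes \<beta> :: "int \<Rightarrow> real^'n"
  assumes b01: "\<And>j i. \<beta> j $ i \<in> {0, 1}"
    and Q: "Q \<in> Dk \<beta> k" and K: "K \<ge> 0"
  shows "danc \<beta> Q K \<in> Dk \<beta> (k + K) \<and> Q \<subseteq> danc \<beta> Q K"
proof -
  have dl: "dlev \<beta> Q = k" using Dk_dlev[OF Q] .
  obtain F where F: "F \<in> Dk \<beta> (k+K)" "Q \<subseteq> F" using Dk_nest[where \<beta>=\<beta>, OF b01 Q, of "k+K"] K by auto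
  have ex: "\<exists>!S. S \<in> Dk \<beta> (k + K) \<and> Q \<subseteq> S"
  proof (rule ex1I[of _ F])
    show "F \<in> Dk \<beta> (k + K) \<and> Q \<subseteq> F" using F by simp
    fix S assume S: "S \<in> Dk \<beta> (k + K) \<and> Q \<subseteq> S"
    show "S = F" using Dk_same[of S \<beta> "k+K" F] S F Dk_nonempty[OF Q] by blast
  qed
  show ?thesis unfolding danc_def dl using theI'[OF ex] .
qed

lemma danc_side:
  fixes \<beta> :: "int \<Rightarrow> real^'n"
  assumes b01: "\<And>j i. \<beta> j $ i \<in> {0, 1}"
    and Q: "Q \<in> Dk \<beta> k" and K: "K \<ge> 0"
  shows "side \<beta> (danc \<beta> Q K) = 2 powr real_of_int (k + K)"
  using danc_props[where \<beta>=\<beta>, OF b01 Q K] Dk_side by blast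

lemma stopgen_Dgrid: "Qs \<in> Dgrid \<beta> \<Longrightarrow> stopgen \<beta> M b A p Qs j \<subseteq> Dgrid \<beta>"
  by (induction j) (auto simp: stopchildren_def)

lemma stopfam_Dgrid: "Qs \<in> Dgrid \<beta> \<Longrightarrow> stopfam \<beta> M b A p Qs \<subseteq> Dgrid \<beta>"
  unfolding stopfam_def using stopgen_Dgrid by blast

lemma Qs_stopfam: "Qs \<in> stopfam \<beta> M b A p Qs"
  unfolding stopfam_def by (auto intro!: exI[of _ 0])

lemma stopparent_Dgrid:
  fixes \<beta> :: "int \<Rightarrow> real^'n"
  assumes b01: "\<And>j i. \<beta> j $ i \<in> {0, 1}"
    and Qs: "Qs \<in> Dgrid \<beta>" and P: "P \<in> Dgrid \<beta>" and PQ: "P \<subseteq> Qs"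
  shows "stopparent \<beta> M b A p Qs P \<in> Dgrid \<beta>"
proof -
  define SF where "SF = stopfam \<beta> M b A p Qs"
  define k0 where "k0 = dlev \<beta> P"
  have Pk: "P \<in> Dk \<beta> k0" using Dgrid_Dk[OF P] k0_def by simp
  have Pne: "P \<noteq> {}" using Dk_nonempty[OF Pk] .
  have SFg: "SF \<subseteq> Dgrid \<beta>" unfolding SF_def using stopfam_Dgrid[OF Qs] .
  have lev: "dlev \<beta> F \<ge> k0" if "F \<in> SF" "P \<subseteq> F" for F
  proof (rule ccontr)
    assume "\<not> k0 \<le> dlev \<beta> F"
    hence lt: "dlev \<beta> F \<le> k0" "dlev \<beta> F \<noteq> k0" by auto
    have Fk: "F \<in> Dk \<beta> (dlev \<beta> F)" using Dgrid_Dk that SFg by blast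
    have "F \<subseteq> P" using Dk_nested[where \<beta>=\<beta>, OF b01 Fk Pk lt(1)] that Pne by blast
    hence "F = P" using that by blast
    thus False using lt Dk_dlev[OF Pk] by simp
  qed
  define Pr where "Pr n = (\<exists>F\<in>SF. P \<subseteq> F \<and> dlev \<beta> F = k0 + int n)" for n
  have "Pr (nat (dlev \<beta> Qs - k0))" unfolding Pr_def
    using Qs_stopfam[of Qs \<beta> M b A p] lev[of Qs] PQ unfolding SF_def by (auto intro!: bexI[of _ Qs])
  hence "Pr (LEAST n. Pr n)" by (rule LeastI)
  then obtain F0 where F0: "F0 \<in> SF" "P \<subseteq> F0" "dlev \<beta> F0 = k0 + int (LEAST n. Pr n)"
    unfolding Pr_def by blast
  have least: "F0 \<subseteq> F" if "F \<in> SF" "P \<subseteq> F" for F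
  proof -
    have "Pr (nat (dlev \<beta> F - k0))" unfolding Pr_def using that lev[OF that] by auto
    hence "(LEAST n. Pr n) \<le> nat (dlev \<beta> F - k0)" by (rule Least_le)
    hence le: "dlev \<beta> F0 \<le> dlev \<beta> F" using F0(3) lev[OF that] by linarith
    have "F0 \<in> Dk \<beta> (dlev \<beta> F0)" "F \<in> Dk \<beta> (dlev \<beta> F)" using Dgrid_Dk F0 that SFg by blast+
    thus ?thesis using Dk_nested[where \<beta>=\<beta>, OF b01 _ _ le] F0(2) that(2) Pne by blast
  qed
  have "stopparent \<beta> M b A p Qs P = F0"
    unfolding stopparent_def SF_def[symmetric]
  proof (rule the_equality)
    show "F0 \<in> SF \<and> P \<subseteq> F0 \<and> (\<forall>F'\<in>SF. P \<subseteq> F' \<longrightarrow> F0 \<subseteq> F')" using F0 least by blast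
    fix F assume "F \<in> SF \<and> P \<subseteq> F \<and> (\<forall>F'\<in>SF. P \<subseteq> F' \<longrightarrow> F \<subseteq> F')"
    thus "F = F0" using least F0 by blast
  qed
  thus ?thesis using F0 SFg by blast
qed

lemma dcube_borel: "dcube \<beta> k v \<in> sets borel"
proof -
  have "dcube \<beta> k v = (\<Inter>i. {x. 2 powr real_of_int k * real_of_int (v$i) + dshift \<beta> k $ i \<le> x$i}
       \<inter> {x. x$i < 2 powr real_of_int k * (real_of_int (v$i) + 1) + dshift \<beta> k $ i})"
    unfolding dcube_def by auto
  also have "\<dots> \<in> sets borel" by measurable
  finally show ?thesis .
qed

lemma Dgrid_borel: "Q \<in> Dgrid \<beta> \<Longrightarrow> Q \<in> sets borel"
  unfolding Dgrid_def Dk_def using dcube_borel by blast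



lemma linf_ge: "\<bar>x$i - y$i\<bar> \<le> linf x y"
  unfolding linf_def by (rule Max_ge) auto

lemma linf_le_iff: "linf x y \<le> r \<longleftrightarrow> (\<forall>i. \<bar>x$i - y$i\<bar> \<le> r)"
  unfolding linf_def by (subst Max_le_iff) auto

lemma linf_nonneg: "0 \<le> linf x y"
  using linf_ge[of x undefined y] by linarith

lemma linf_sym: "linf x y = linf y x"
  unfolding linf_def by (simp add: abs_minus_commute)

lemma linf_tri: "linf x z \<le> linf x y + linf y z"
proof -
  have "\<bar>x$i - z$i\<bar> \<le> linf x y + linf y z" for i
    using linf_ge[of x i y] linf_ge[of y i z] by linarith
  thus ?thesis by (simp add: linf_le_iff)
qed

lemma linf_meas: "(\<lambda>w. linf (f w) (g w)) \<in> borel_measurable N"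
  if [measurable]: "f \<in> borel_measurable N" "g \<in> borel_measurable N"
  for f g :: "'b \<Rightarrow> real^'n"
proof -
  have [measurable]: "\<And>i. (\<lambda>x. f x $ i) \<in> borel_measurable N" "\<And>i. (\<lambda>x. g x $ i) \<in> borel_measurable N"
    using measurable_compose[OF that(1) borel_measurable_nth] measurable_compose[OF that(2) borel_measurable_nth]
    by auto
  show ?thesis unfolding linf_def by measurable
qed

lemma linf_ball_borel: "linf_ball c r \<in> sets borel"
proof -
  have "(\<lambda>y. linf c y) \<in> borel_measurable borel" by (rule linf_meas) auto
  thus ?thesis unfolding linf_ball_def by measurable
qed

lemma weight_integral:
  fixes M :: "(real^'n) measure"
  assumes sets_M: "sets M = sets borel"
    and growth: "\<And>x \<rho>. \<rho> > 0 \<Longrightarrow> emeasure M (linf_ball x \<rho>) \<le> ennreal (C0 * \<rho> powr m)"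
    and m: "m > 0" and e: "e > m" and t: "t > 0"
  shows "(\<integral>\<^sup>+ y. ennreal ((t / (t + linf c y)) powr e) \<partial>M)
          \<le> ennreal (2 powr e * max C0 0 / (1 - 2 powr (m - e)) * t powr m)"
proof -
  define q where "q = (2::real) powr (-e)"
  have q: "0 < q" "q < 1" using e m unfolding q_def by (auto intro: powr_less_one)
  define B where "B k = linf_ball c (2^k * t)" for k :: nat
  define f where "f k y = ennreal (2 powr e * q^k) * indicator (B k) y" for k y
  have Bs: "B k \<in> sets M" for k unfolding B_def sets_M by (rule linf_ball_borel)
  have pw: "ennreal ((t / (t + linf c y)) powr e) \<le> (\<Sum>k. f k y)" for y
  proof -
    define \<rho> where "\<rho> = linf c y"
    have \<rho>0: "\<rho> \<ge> 0" unfolding \<rho>_def by (rule linf_nonneg)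
    have fle: "f k y \<le> (\<Sum>k. f k y)" for k
      using sum_le_suminf[of "\<lambda>k. f k y" "{k}"] by (simp add: summableI)
    show ?thesis
    proof (cases "\<rho> < t")
      case True
      have "(t / (t + \<rho>)) powr e \<le> 1" using \<rho>0 t e m
        by (intro powr_le1) (auto simp: divide_simps)
      also have "1 \<le> 2 powr e * q^0" using e m by (simp add: ge_one_powr_ge_zero)
      finally have "ennreal ((t / (t + \<rho>)) powr e) \<le> f 0 y"
        unfolding f_def B_def linf_ball_def using True \<rho>_def by (simp add: ennreal_leI)
      thus ?thesis using fle[of 0] \<rho>_def by simp
    next
      case False
      have "\<exists>n. \<rho> / t < 2 ^ n" by (rule real_arch_pow) simp
      hence ex: "\<exists>n. \<rho> < 2^n * t" using t by (simp add: divide_simps)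
      define k where "k = (LEAST n. \<rho> < 2^n * t)"
      have k1: "\<rho> < 2^k * t" unfolding k_def using LeastI_ex[OF ex] .
      have k0: "k \<noteq> 0" proof assume "k = 0" thus False using k1 False by simp qed
      have k2: "\<not> \<rho> < 2^(k-1) * t" unfolding k_def by (rule not_less_Least) (use k0 k_def in simp)
      have \<rho>pos: "\<rho> > 0" using False t by simp
      have "(t / (t + \<rho>)) powr e \<le> (t / \<rho>) powr e"
        using t \<rho>pos e m by (intro powr_mono2) (auto simp: divide_simps)
      also have "t / \<rho> \<le> 1 / 2^(k-1)" using k2 t \<rho>pos by (simp add: divide_simps mult.commute)
      hence "(t / \<rho>) powr e \<le> (1 / 2^(k-1)) powr e"
        using t \<rho>pos e m by (intro powr_mono2) auto
      also have "(1 / 2^(k-1) :: real) powr e = 2 powr e * q^k"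
      proof -
        have "(1 / 2^(k-1) :: real) = 2 powr (- real (k-1))"
          by (simp add: powr_minus_divide powr_realpow)
        hence "(1 / 2^(k-1) :: real) powr e = 2 powr (- (real (k-1) * e))"
          by (simp add: powr_powr)
        also have "real (k-1) = real k - 1" using k0 by simp
        also have "2 powr (- ((real k - 1) * e)) = 2 powr e * (2 powr (-e))^k"
          by (simp add: powr_realpow[symmetric] powr_powr powr_add[symmetric] algebra_simps)
        finally show ?thesis unfolding q_def .
      qed
      finally have "ennreal ((t / (t + \<rho>)) powr e) \<le> f k y"
        unfolding f_def B_def linf_ball_def using k1 \<rho>_def by (simp add: ennreal_leI)
      thus ?thesis using fle[of k] \<rho>_def by simp
    qed
  qed
  have "(\<integral>\<^sup>+ y. ennreal ((t / (t + linf c y)) powr e) \<partial>M) \<le> (\<integral>\<^sup>+ y. (\<Sum>k. f k y) \<partial>M)"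
    by (rule nn_integral_mono) (rule pw)
  also have "\<dots> = (\<Sum>k. integral\<^sup>N M (f k))"
    by (rule nn_integral_suminf) (use Bs in \<open>auto simp: f_def\<close>)
  also have "\<dots> \<le> (\<Sum>k. ennreal (2 powr e * max C0 0 * t powr m * (q * 2 powr m)^k))"
  proof (rule suminf_le)
    fix k
    have "integral\<^sup>N M (f k) = ennreal (2 powr e * q^k) * emeasure M (B k)"
      unfolding f_def by (rule nn_integral_cmult_indicator[OF Bs])
    also have "emeasure M (B k) \<le> ennreal (max C0 0 * (2^k * t) powr m)"
      unfolding B_def using growth[of "2^k*t" c] t
      by (meson dual_order.trans ennreal_leI max.cobounded1 mult_right_mono powr_ge_zero zero_less_mult_iff zero_less_power zero_less_numeral)
    hence "ennreal (2 powr e * q^k) * emeasure M (B k) \<le> ennreal (2 powr e * q^k) * ennreal (max C0 0 * (2^k * t) powr m)"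
      by (rule mult_left_mono) simp
    also have "\<dots> = ennreal (2 powr e * max C0 0 * t powr m * (q * 2 powr m)^k)"
      using q t by (simp add: ennreal_mult[symmetric] powr_mult powr_realpow[symmetric] powr_powr
            power_mult_distrib mult_ac)
    finally show "integral\<^sup>N M (f k) \<le> ennreal (2 powr e * max C0 0 * t powr m * (q * 2 powr m)^k)" .
  qed (auto intro: summableI)
  also have "\<dots> = ennreal (\<Sum>k. 2 powr e * max C0 0 * t powr m * (q * 2 powr m)^k)"
  proof (rule suminf_ennreal2)
    have qq: "q * 2 powr m = 2 powr (m - e)" unfolding q_def by (simp add: powr_add[symmetric])
    have "2 powr (m - e) < (1::real)" using e by (intro powr_less_one) auto
    thus "summable (\<lambda>k. 2 powr e * max C0 0 * t powr m * (q * 2 powr m)^k)"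
      unfolding qq by (intro summable_mult summable_geometric) simp
  qed (use q in simp)
  also have "(\<Sum>k. 2 powr e * max C0 0 * t powr m * (q * 2 powr m)^k)
      = 2 powr e * max C0 0 / (1 - 2 powr (m - e)) * t powr m"
  proof -
    have qq: "q * 2 powr m = 2 powr (m - e)" unfolding q_def by (simp add: powr_add[symmetric])
    have lt: "norm (2 powr (m - e)) < (1::real)" using e by (simp add: powr_less_one)
    show ?thesis unfolding qq suminf_mult[OF summable_geometric[OF lt]] suminf_geometric[OF lt]
      by simp
  qed
  finally show ?thesis .
qed

definition WC :: "real \<Rightarrow> real \<Rightarrow> real \<Rightarrow> real" where
  "WC C0 m e = 2 powr e * max C0 0 / (1 - 2 powr (m - e))"

lemma WC_nonneg: "m < e \<Longrightarrow> 0 \<le> WC C0 m e"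
  unfolding WC_def using powr_less_one[of 2 "m - e"] by (auto intro!: divide_nonneg_pos)

lemma kernel_sq:
  assumes kb: "cmod kv \<le> C1 * t powr \<alpha> / X powr (m + \<alpha>)" and X: "X > 0" and t: "t > 0"
  shows "(cmod kv)^2 \<le> C1^2 * t powr (2*\<alpha>) * X powr (-(2*(m+\<alpha>)))"
proof -
  have "(cmod kv)^2 \<le> (C1 * t powr \<alpha> / X powr (m + \<alpha>))^2"
    by (rule power_mono[OF kb]) simp
  also have "\<dots> = C1^2 * (t powr \<alpha>)^2 / (X powr (m+\<alpha>))^2"
    by (simp add: power_divide power_mult_distrib)
  also have "\<dots> = C1^2 * t powr (2*\<alpha>) * X powr (-(2*(m+\<alpha>)))"
    using t X by (simp add: powr_power divide_powr_uminus mult_ac)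
  finally show ?thesis .
qed

lemma kernel_z:
  fixes M :: "(real^'n) measure" and k :: "real^'n \<Rightarrow> complex"
  assumes sets_M: "sets M = sets borel"
    and growth: "\<And>x \<rho>. \<rho> > 0 \<Longrightarrow> emeasure M (linf_ball x \<rho>) \<le> ennreal (C0 * \<rho> powr m)"
    and m: "m > 0" and lam: "2 < lam" and alpha: "0 < \<alpha>" "\<alpha> \<le> m * (lam - 2) / 2"
    and kmeas: "k \<in> borel_measurable borel"
    and kb: "\<And>y. cmod (k y) \<le> C1 * t powr \<alpha> / (t + linf y z) powr (m + \<alpha>)"
    and t: "0 < t" and td: "t \<le> d" and dxz: "d \<le> linf x z"
  shows "(\<integral>\<^sup>+ y. ennreal ((cmod (k y))^2 * (t / (t + linf x y)) powr (m * lam) / t powr m) \<partial>M)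
    \<le> ennreal (C1^2 * (2 powr (2*(m+\<alpha>)) * WC C0 m (m*lam) + 2 powr (m*lam) * WC C0 m (2*(m+\<alpha>)))
          * t powr (2*\<alpha>) * d powr (-(2*(m+\<alpha>))))"
proof -
  define a where "a = m + \<alpha>"
  have d: "d > 0" using t td by simp
  have C1: "C1 \<ge> 0"
  proof (rule ccontr)
    assume "\<not> C1 \<ge> 0"
    hence "C1 * t powr \<alpha> / (t + linf x z) powr (m + \<alpha>) < 0"
      using t linf_nonneg[of x z] by (intro divide_neg_pos mult_neg_pos) (auto simp: linf_sym)
    thus False using kb[of x] norm_ge_zero[of "k x"] by simp
  qed
  have mlam: "m * lam > m" using m lam by (simp add: mult_less_cancel_left_pos[of m 1 lam, simplified])
  have mlam': "m * lam \<ge> 2 * a" using alpha m lam unfolding a_def by (simp add: field_simps)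
  define wx where "wx y = (t / (t + linf x y)) powr (m * lam)" for y
  define wz where "wz y = (t / (t + linf z y)) powr (2 * a)" for y
  define A1 where "A1 = C1^2 * 2 powr (2*a) * t powr (2*\<alpha>) * d powr (-(2*a)) / t powr m"
  define A2 where "A2 = C1^2 * t powr (-(2*m)) * (2*t/d) powr (m*lam) / t powr m"
  have A1: "A1 \<ge> 0" unfolding A1_def using C1 by simp
  have A2: "A2 \<ge> 0" unfolding A2_def using C1 by simp
  have pw: "(cmod (k y))^2 * wx y / t powr m \<le> A1 * wx y + A2 * wz y" for y
  proof -
    define X where "X = t + linf y z"
    have X: "X > 0" unfolding X_def using t linf_nonneg[of y z] by simp
    have sq: "(cmod (k y))^2 \<le> C1^2 * t powr (2*\<alpha>) * X powr (-(2*a))"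
      unfolding a_def by (rule kernel_sq[OF kb[of y, folded X_def] X t])
    have wx0: "wx y \<ge> 0" "wz y \<ge> 0" unfolding wx_def wz_def by simp_all
    have tri: "d \<le> linf x y + linf y z" using dxz linf_tri[of x z y] by simp
    show ?thesis
    proof (cases "linf y z \<ge> d/2")
      case True
      have "X powr (-(2*a)) \<le> (d/2) powr (-(2*a))"
        using True d alpha m t unfolding X_def a_def by (intro powr_mono2') (auto simp: linf_nonneg)
      also have "(d/2) powr (-(2*a)) = 2 powr (2*a) * d powr (-(2*a))"
        by (simp add: powr_divide powr_minus_divide)
      finally have "(cmod (k y))^2 \<le> C1^2 * t powr (2*\<alpha>) * (2 powr (2*a) * d powr (-(2*a)))"
        using sq by (meson dual_order.trans mult_left_mono powr_ge_zero zero_le_power2 mult_nonneg_nonneg)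
      hence "(cmod (k y))^2 * wx y / t powr m \<le> C1^2 * t powr (2*\<alpha>) * (2 powr (2*a) * d powr (-(2*a))) * wx y / t powr m"
        using wx0 by (intro divide_right_mono mult_right_mono) auto
      also have "\<dots> = A1 * wx y" unfolding A1_def by (simp add: mult_ac)
      also have "\<dots> \<le> A1 * wx y + A2 * wz y" using A2 wx0 by simp
      finally show ?thesis .
    next
      case False
      hence xy: "linf x y \<ge> d/2" using tri by simp
      have "wx y \<le> (2*t/d) powr (m*lam)" unfolding wx_def
        using t d xy m lam by (intro powr_mono2) (auto simp: divide_simps linf_nonneg)
      moreover have "(cmod (k y))^2 \<le> C1^2 * t powr (-(2*m)) * wz y"
      proof -
        have "wz y = t powr (2*a) * X powr (-(2*a))" unfolding wz_def X_def
          using t by (simp add: powr_divide divide_powr_uminus linf_sym)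
        hence E1: "C1^2 * t powr (-(2*m)) * wz y = C1^2 * (t powr (-(2*m)) * t powr (2*a)) * X powr (-(2*a))"
          by (simp add: mult_ac)
        have E2: "t powr (-(2*m)) * t powr (2*a) = t powr (2*\<alpha>)"
          unfolding a_def by (simp add: powr_add[symmetric])
        have E3: "C1^2 * t powr (-(2*m)) * wz y = C1^2 * t powr (2*\<alpha>) * X powr (-(2*a))"
          using E1 E2 by simp
        show ?thesis using sq E3 by linarith
      qed
      ultimately have "(cmod (k y))^2 * wx y \<le> C1^2 * t powr (-(2*m)) * wz y * (2*t/d) powr (m*lam)"
        using wx0 C1 by (intro mult_mono) auto
      hence "(cmod (k y))^2 * wx y / t powr m \<le> C1^2 * t powr (-(2*m)) * wz y * (2*t/d) powr (m*lam) / t powr m"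
        by (intro divide_right_mono) auto
      also have "\<dots> = A2 * wz y" unfolding A2_def by (simp add: mult_ac)
      also have "\<dots> \<le> A1 * wx y + A2 * wz y" using A1 wx0 by simp
      finally show ?thesis .
    qed
  qed
  have [measurable]: "(\<lambda>y. linf c y) \<in> borel_measurable M" for c
    unfolding measurable_cong_sets[OF sets_M refl] by (rule linf_meas) auto
  have wxm[measurable]: "wx \<in> borel_measurable M" unfolding wx_def by measurable
  have wzm[measurable]: "wz \<in> borel_measurable M" unfolding wz_def by measurable
  have Wx: "(\<integral>\<^sup>+ y. ennreal (wx y) \<partial>M) \<le> ennreal (WC C0 m (m*lam) * t powr m)"
    unfolding wx_def WC_def using weight_integral[OF sets_M growth m _ t, of "m*lam" x] mlam alpha m
    unfolding a_def by simp
  have Wz: "(\<integral>\<^sup>+ y. ennreal (wz y) \<partial>M) \<le> ennreal (WC C0 m (2*a) * t powr m)"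
    unfolding wz_def WC_def using weight_integral[OF sets_M growth m _ t, of "2*a" z] alpha m
    unfolding a_def by simp
  have "(\<integral>\<^sup>+ y. ennreal ((cmod (k y))^2 * (t / (t + linf x y)) powr (m * lam) / t powr m) \<partial>M)
      \<le> (\<integral>\<^sup>+ y. ennreal A1 * ennreal (wx y) + ennreal A2 * ennreal (wz y) \<partial>M)"
  proof (rule nn_integral_mono)
    fix y
    have w0: "wx y \<ge> 0" "wz y \<ge> 0" unfolding wx_def wz_def by simp_all
    have "ennreal ((cmod (k y))^2 * (t / (t + linf x y)) powr (m * lam) / t powr m) \<le> ennreal (A1 * wx y + A2 * wz y)"
      using pw[of y] unfolding wx_def by (rule ennreal_leI)
    also have "\<dots> = ennreal A1 * ennreal (wx y) + ennreal A2 * ennreal (wz y)"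
      using A1 A2 w0 by (simp add: ennreal_plus ennreal_mult)
    finally show "ennreal ((cmod (k y))^2 * (t / (t + linf x y)) powr (m * lam) / t powr m) \<le> ennreal A1 * ennreal (wx y) + ennreal A2 * ennreal (wz y)" .
  qed
  also have "\<dots> = ennreal A1 * (\<integral>\<^sup>+ y. ennreal (wx y) \<partial>M) + ennreal A2 * (\<integral>\<^sup>+ y. ennreal (wz y) \<partial>M)"
    by (simp add: nn_integral_add nn_integral_cmult)
  also have "\<dots> \<le> ennreal A1 * ennreal (WC C0 m (m*lam) * t powr m) + ennreal A2 * ennreal (WC C0 m (2*a) * t powr m)"
    by (intro add_mono mult_left_mono Wx Wz) auto
  also have "\<dots> = ennreal (A1 * (WC C0 m (m*lam) * t powr m) + A2 * (WC C0 m (2*a) * t powr m))"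
  proof -
    have "WC C0 m (m*lam) \<ge> 0" "WC C0 m (2*a) \<ge> 0"
      using WC_nonneg[OF mlam] WC_nonneg[of m "2*a" C0] alpha m a_def by auto
    moreover have "t powr m \<ge> 0" by simp
    ultimately show ?thesis using A1 A2 by (simp add: ennreal_plus ennreal_mult)
  qed
  also have "\<dots> \<le> ennreal (C1^2 * (2 powr (2*(m+\<alpha>)) * WC C0 m (m*lam) + 2 powr (m*lam) * WC C0 m (2*(m+\<alpha>)))
          * t powr (2*\<alpha>) * d powr (-(2*(m+\<alpha>))))"
  proof (rule ennreal_leI)
    define p where "p = m * lam - 2 * a"
    have p: "p \<ge> 0" using mlam' unfolding p_def by simp
    have e1: "A1 * t powr m = C1^2 * 2 powr (2*a) * t powr (2*\<alpha>) * d powr (-(2*a))"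
      unfolding A1_def using t by simp
    have "A2 * t powr m = C1^2 * 2 powr (m*lam) * (t powr (-(2*m)) * t powr (m*lam) * d powr (-(m*lam)))"
    proof -
      have tt: "t powr m * t powr (-m) = 1" using t by (simp add: powr_add[symmetric])
      show ?thesis unfolding A2_def using t d tt by (simp add: powr_divide powr_mult divide_powr_uminus mult_ac)
    qed
    also have "t powr (-(2*m)) * t powr (m*lam) * d powr (-(m*lam)) = t powr (2*\<alpha>) * d powr (-(2*a)) * (t powr p / d powr p)"
    proof -
      have "t powr (-(2*m)) * t powr (m*lam) = t powr (2*\<alpha>) * t powr p"
        unfolding p_def a_def by (simp add: powr_add[symmetric])
      moreover have "d powr (-(m*lam)) = d powr (-(2*a)) / d powr p"
        unfolding p_def by (simp add: powr_add[symmetric] powr_diff[symmetric] divide_powr_uminus)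
      ultimately show ?thesis by simp
    qed
    also have "t powr p / d powr p \<le> 1" using t d td p by (simp add: divide_simps powr_mono2)
    hence "C1^2 * 2 powr (m*lam) * (t powr (2*\<alpha>) * d powr (-(2*a)) * (t powr p / d powr p))
        \<le> C1^2 * 2 powr (m*lam) * (t powr (2*\<alpha>) * d powr (-(2*a)))"
    proof -
      assume h1: "t powr p / d powr p \<le> 1"
      have h: "t powr (2*\<alpha>) * d powr (-(2*a)) * (t powr p / d powr p) \<le> t powr (2*\<alpha>) * d powr (-(2*a))"
        by (rule mult_left_le) (use h1 in simp_all)
      show ?thesis by (rule mult_left_mono[OF h]) simp
    qed
    finally have e2: "A2 * t powr m \<le> C1^2 * 2 powr (m*lam) * (t powr (2*\<alpha>) * d powr (-(2*a)))" .
    have w1: "WC C0 m (m*lam) \<ge> 0" "WC C0 m (2*a) \<ge> 0" using WC_nonneg[OF mlam] WC_nonneg[of m "2*a" C0] alpha m a_def by auto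
    have "A1 * (WC C0 m (m*lam) * t powr m) + A2 * (WC C0 m (2*a) * t powr m)
        = (A1 * t powr m) * WC C0 m (m*lam) + (A2 * t powr m) * WC C0 m (2*a)" by (simp add: mult_ac)
    also have "\<dots> \<le> (C1^2 * 2 powr (2*a) * t powr (2*\<alpha>) * d powr (-(2*a))) * WC C0 m (m*lam)
         + (C1^2 * 2 powr (m*lam) * (t powr (2*\<alpha>) * d powr (-(2*a)))) * WC C0 m (2*a)"
      using e1 e2 w1 by (intro add_mono mult_right_mono) auto
    also have "\<dots> = C1^2 * (2 powr (2*(m+\<alpha>)) * WC C0 m (m*lam) + 2 powr (m*lam) * WC C0 m (2*(m+\<alpha>)))
          * t powr (2*\<alpha>) * d powr (-(2*(m+\<alpha>)))" unfolding a_def by (simp add: algebra_simps)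
    finally show "A1 * (WC C0 m (m*lam) * t powr m) + A2 * (WC C0 m (2*a) * t powr m) \<le> \<dots>" .
  qed
  finally show ?thesis .
qed



lemma core:
  fixes M :: "'a measure" and k :: "'a \<Rightarrow> 'a \<Rightarrow> complex" and g :: "'a \<Rightarrow> complex"
  assumes sf: "sigma_finite_measure M" and sp: "space M = UNIV"
    and gm[measurable]: "g \<in> borel_measurable M"
    and km[measurable]: "(\<lambda>w. k (fst w) (snd w)) \<in> borel_measurable (M \<Otimes>\<^sub>M M)"
    and Wm[measurable]: "W \<in> borel_measurable M" and W0: "\<And>y. W y \<ge> 0"
    and supp: "\<And>z. z \<notin> Q \<Longrightarrow> g z = 0"
    and bound: "\<And>z. z \<in> Q \<Longrightarrow> (\<integral>\<^sup>+ y. ennreal ((cmod (k y z))^2 * W y) \<partial>M) \<le> ennreal B"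
  shows "(\<integral>\<^sup>+ y. ennreal ((cmod (\<integral> z. k y z * g z \<partial>M))^2 * W y) \<partial>M)
          \<le> ennreal B * (\<integral>\<^sup>+ z. ennreal (cmod (g z)) \<partial>M)^2"
proof -
  interpret pair_sigma_finite M M using sf by (simp add: pair_sigma_finite_def)
  have kswap[measurable]: "(\<lambda>w. k (snd w) (fst w)) \<in> borel_measurable (M \<Otimes>\<^sub>M M)"
    using measurable_pair_swap_iff[of "\<lambda>w. k (fst w) (snd w)" M M borel] km
    by (simp add: case_prod_beta')
  have Wsnd[measurable]: "(\<lambda>w. W (snd w)) \<in> borel_measurable (M \<Otimes>\<^sub>M M)"
    by (rule measurable_compose[OF measurable_snd Wm])
  define N where "N = (\<integral>\<^sup>+ z. ennreal (cmod (g z)) \<partial>M)"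
  define H where "H y = (\<integral>\<^sup>+ z. ennreal (cmod (g z) * (cmod (k y z))^2) \<partial>M)" for y
  have km1[measurable]: "(\<lambda>z. k y z) \<in> borel_measurable M" for y
    using measurable_Pair2[OF km, of y] sp by simp
  have km2[measurable]: "(\<lambda>y. k y z) \<in> borel_measurable M" for z
    using measurable_Pair1[OF km, of z] sp by simp
  have pw: "ennreal (cmod (\<integral> z. k y z * g z \<partial>M))^2 \<le> N * H y" for y
  proof -
    have "ennreal (cmod (\<integral> z. k y z * g z \<partial>M)) \<le> (\<integral>\<^sup>+ z. ennreal (cmod (k y z * g z)) \<partial>M)"
    proof (cases "integrable M (\<lambda>z. k y z * g z)")
      case True thus ?thesis by (rule integral_norm_bound_ennreal)
    next
      case False thus ?thesis by (simp add: not_integrable_integral_eq)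
    qed
    also have "\<dots> = (\<integral>\<^sup>+ z. ennreal (sqrt (cmod (g z))) * ennreal (sqrt (cmod (g z)) * cmod (k y z)) \<partial>M)"
    proof (rule nn_integral_cong)
      fix z
      have "ennreal (sqrt (cmod (g z))) * ennreal (sqrt (cmod (g z)) * cmod (k y z))
          = ennreal (sqrt (cmod (g z)) * (sqrt (cmod (g z)) * cmod (k y z)))"
        by (simp add: ennreal_mult)
      also have "sqrt (cmod (g z)) * (sqrt (cmod (g z)) * cmod (k y z)) = cmod (k y z * g z)"
        by (simp add: norm_mult mult_ac)
      finally show "ennreal (cmod (k y z * g z)) = ennreal (sqrt (cmod (g z))) * ennreal (sqrt (cmod (g z)) * cmod (k y z))"
        by simp
    qed
    finally have le1: "ennreal (cmod (\<integral> z. k y z * g z \<partial>M)) \<le> \<dots>" .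
    have "ennreal (cmod (\<integral> z. k y z * g z \<partial>M))^2 \<le>
        (\<integral>\<^sup>+ z. ennreal (sqrt (cmod (g z))) * ennreal (sqrt (cmod (g z)) * cmod (k y z)) \<partial>M)^2"
      by (rule power_mono[OF le1]) simp
    also have "\<dots> \<le> (\<integral>\<^sup>+ z. ennreal (sqrt (cmod (g z)))^2 \<partial>M) * (\<integral>\<^sup>+ z. ennreal (sqrt (cmod (g z)) * cmod (k y z))^2 \<partial>M)"
      by (rule Cauchy_Schwarz_nn_integral) measurable
    also have "(\<integral>\<^sup>+ z. ennreal (sqrt (cmod (g z)))^2 \<partial>M) = N"
      unfolding N_def by (rule nn_integral_cong) (simp add: ennreal_power)
    also have "(\<integral>\<^sup>+ z. ennreal (sqrt (cmod (g z)) * cmod (k y z))^2 \<partial>M) = H y"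
      unfolding H_def
      by (rule nn_integral_cong) (simp add: ennreal_power power_mult_distrib)
    finally show ?thesis .
  qed
  have "(\<integral>\<^sup>+ y. ennreal ((cmod (\<integral> z. k y z * g z \<partial>M))^2 * W y) \<partial>M)
      \<le> (\<integral>\<^sup>+ y. N * (H y * ennreal (W y)) \<partial>M)"
  proof (rule nn_integral_mono)
    fix y
    have "ennreal ((cmod (\<integral> z. k y z * g z \<partial>M))^2 * W y) = ennreal (cmod (\<integral> z. k y z * g z \<partial>M))^2 * ennreal (W y)"
      using W0[of y] by (simp add: ennreal_mult ennreal_power)
    also have "\<dots> \<le> N * H y * ennreal (W y)" by (rule mult_right_mono[OF pw]) simp
    finally show "ennreal ((cmod (\<integral> z. k y z * g z \<partial>M))^2 * W y) \<le> N * (H y * ennreal (W y))"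
      by (simp add: mult_ac)
  qed
  also have "\<dots> = N * (\<integral>\<^sup>+ y. H y * ennreal (W y) \<partial>M)"
    unfolding H_def by (rule nn_integral_cmult) measurable
  also have "(\<integral>\<^sup>+ y. H y * ennreal (W y) \<partial>M)
      = (\<integral>\<^sup>+ y. (\<integral>\<^sup>+ z. ennreal (cmod (g z) * (cmod (k y z))^2 * W y) \<partial>M) \<partial>M)"
  proof (rule nn_integral_cong)
    fix y
    show "H y * ennreal (W y) = (\<integral>\<^sup>+ z. ennreal (cmod (g z) * (cmod (k y z))^2 * W y) \<partial>M)"
      unfolding H_def using W0[of y]
      by (subst nn_integral_multc[symmetric]) (auto simp: ennreal_mult[symmetric] intro!: nn_integral_cong)
  qed
  also have "\<dots> = (\<integral>\<^sup>+ z. (\<integral>\<^sup>+ y. ennreal (cmod (g z) * (cmod (k y z))^2 * W y) \<partial>M) \<partial>M)"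
    by (rule Fubini') measurable
  also have "\<dots> \<le> (\<integral>\<^sup>+ z. ennreal (cmod (g z)) * ennreal B \<partial>M)"
  proof (rule nn_integral_mono)
    fix z
    show "(\<integral>\<^sup>+ y. ennreal (cmod (g z) * (cmod (k y z))^2 * W y) \<partial>M) \<le> ennreal (cmod (g z)) * ennreal B"
    proof (cases "z \<in> Q")
      case True
      have "(\<integral>\<^sup>+ y. ennreal (cmod (g z) * (cmod (k y z))^2 * W y) \<partial>M)
          = ennreal (cmod (g z)) * (\<integral>\<^sup>+ y. ennreal ((cmod (k y z))^2 * W y) \<partial>M)"
        using W0 by (subst nn_integral_cmult[symmetric]) (auto simp: ennreal_mult mult_ac intro!: nn_integral_cong)
      also have "\<dots> \<le> ennreal (cmod (g z)) * ennreal B" by (rule mult_left_mono[OF bound[OF True]]) simp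
      finally show ?thesis .
    next
      case False thus ?thesis using supp[OF False] by simp
    qed
  qed
  also have "\<dots> = N * ennreal B" unfolding N_def by (rule nn_integral_multc) measurable
  finally have "(\<integral>\<^sup>+ y. ennreal ((cmod (\<integral> z. k y z * g z \<partial>M))^2 * W y) \<partial>M) \<le> N * (N * ennreal B)"
    by (simp add: mult_left_mono)
  thus ?thesis unfolding N_def by (simp add: power2_eq_square mult_ac)
qed



lemma arith_bound:
  fixes m \<alpha> \<gamma> K lq t d \<theta> :: real and i j r :: nat
  assumes m: "m > 0" and alpha: "\<alpha> > 0" and gam: "0 < \<gamma>" "\<gamma> < 1/2"
    and g1: "\<gamma> \<le> \<alpha> / (2 * (m + \<alpha>))" and g2: "m * \<gamma> / (1 - \<gamma>) \<le> \<alpha> / 4"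
    and K: "K \<ge> 0" and t: "0 < t" "t \<le> 2 powr (lq - i)"
    and d: "2 powr (j + lq - i * \<gamma>) / 3 \<le> d"
    and th: "\<theta> \<le> ((i + j) * \<gamma> + r) / (1 - \<gamma>) + 1"
  shows "K * t powr (2*\<alpha>) * d powr (-(2*(m+\<alpha>)))
     \<le> (sqrt (K * 3 powr (2*(m+\<alpha>)) * 2 powr (4*m*r + 2*m)) * 2 powr (- \<alpha> / 4 * real (i + j))
          * (2 powr (lq + j + \<theta>)) powr (- m))^2"
proof -
  define a where "a = m + \<alpha>"
  define n where "n = real (i + j)"
  define E0 where "E0 = 4*m*r + 2*m"
  have a: "a > 0" using m alpha a_def by simp
  have d0: "d > 0" using d by (smt (verit) divide_pos_pos powr_gt_zero)
  have "t powr (2*\<alpha>) \<le> (2 powr (lq - i)) powr (2*\<alpha>)"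
    using t alpha by (intro powr_mono2) auto
  also have "\<dots> = 2 powr ((lq - i) * (2*\<alpha>))" by (simp add: powr_powr)
  finally have T: "t powr (2*\<alpha>) \<le> 2 powr ((lq - i) * (2*\<alpha>))" .
  have "d powr (-(2*a)) \<le> (2 powr (j + lq - i * \<gamma>) / 3) powr (-(2*a))"
    using d a by (intro powr_mono2') auto
  also have "\<dots> = 2 powr ((j + lq - i * \<gamma>) * (-(2*a))) * 3 powr (2*a)"
    by (simp add: powr_divide powr_powr powr_minus_divide)
  finally have D: "d powr (-(2*a)) \<le> 2 powr ((j + lq - i * \<gamma>) * (-(2*a))) * 3 powr (2*a)" .
  have "K * t powr (2*\<alpha>) * d powr (-(2*a))
      \<le> K * 2 powr ((lq - i) * (2*\<alpha>)) * (2 powr ((j + lq - i * \<gamma>) * (-(2*a))) * 3 powr (2*a))"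
    using T D K by (intro mult_mono) auto
  also have "\<dots> = K * 3 powr (2*a) * (2 powr ((lq - i) * (2*\<alpha>)) * 2 powr ((j + lq - i * \<gamma>) * (-(2*a))))"
    by (simp add: mult_ac)
  also have "\<dots> = K * 3 powr (2*a) * 2 powr ((lq - i) * (2*\<alpha>) + (j + lq - i * \<gamma>) * (-(2*a)))"
    by (simp only: powr_add[symmetric])
  also have "\<dots> \<le> K * 3 powr (2*a) * 2 powr (E0 - \<alpha>/2 * n - 2*m*(lq + j + \<theta>))"
  proof (intro mult_left_mono)
    have ga: "2 * a * \<gamma> \<le> \<alpha>" using g1 a unfolding a_def by (simp add: field_simps)
    have A: "2 * a * \<gamma> * i \<le> \<alpha> * i" using ga by (intro mult_right_mono) auto
    have g1': "1 - \<gamma> > 0" "1 / (1 - \<gamma>) \<le> 2" using gam by (auto simp: divide_simps)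
    have "2 * m * \<theta> \<le> 2 * m * (((i + j) * \<gamma> + r) / (1 - \<gamma>) + 1)"
      using th m by simp
    also have "((i + j) * \<gamma> + r) / (1 - \<gamma>) = n * (\<gamma> / (1 - \<gamma>)) + r * (1 / (1 - \<gamma>))"
      unfolding n_def by (simp add: add_divide_distrib)
    also have "2 * m * (n * (\<gamma> / (1 - \<gamma>)) + r * (1 / (1 - \<gamma>)) + 1)
       = 2 * n * (m * (\<gamma> / (1 - \<gamma>))) + 2 * m * r * (1 / (1 - \<gamma>)) + 2 * m"
      by (simp add: algebra_simps)
    also have "\<dots> \<le> 2 * n * (\<alpha> / 4) + 2 * m * r * 2 + 2 * m"
      using g2 g1' m unfolding n_def by (intro add_mono mult_left_mono) auto
    finally have B: "2 * m * \<theta> \<le> \<alpha> / 2 * n + 4 * m * r + 2 * m" by simp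
    have nn: "n = i + j" unfolding n_def by simp
    have aj: "\<alpha> * real j \<ge> 0" using alpha by simp
    have eL: "(lq - i) * (2*\<alpha>) + (j + lq - i * \<gamma>) * (-(2*a))
        = -2*(\<alpha>*real i) - 2*(m*real j) - 2*(\<alpha>*real j) - 2*(m*lq) + 2 * (m + \<alpha>) * \<gamma> * real i"
      unfolding a_def by (simp add: algebra_simps)
    have eR: "E0 - \<alpha>/2 * n - 2*m*(lq + j + \<theta>)
        = 4*m*r + 2*m - \<alpha>*real i/2 - \<alpha>*real j/2 - 2*(m*lq) - 2*(m*real j) - 2*m*\<theta>"
      unfolding E0_def nn by (simp add: algebra_simps)
    have B': "2 * m * \<theta> \<le> \<alpha>*real i/2 + \<alpha>*real j/2 + 4 * m * r + 2 * m"
      using B unfolding nn by (simp add: algebra_simps add_divide_distrib)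
    have "(lq - i) * (2*\<alpha>) + (j + lq - i * \<gamma>) * (-(2*a)) \<le> E0 - \<alpha>/2 * n - 2*m*(lq + j + \<theta>)"
      unfolding eL eR using A[unfolded a_def] B' aj by linarith
    thus "2 powr ((lq - i) * (2*\<alpha>) + (j + lq - i * \<gamma>) * (-(2*a)))
        \<le> 2 powr (E0 - \<alpha>/2 * n - 2*m*(lq + j + \<theta>))" by simp
  qed (use K in simp)
  also have "\<dots> = (sqrt (K * 3 powr (2*a) * 2 powr E0) * 2 powr (- \<alpha> / 4 * n)
          * (2 powr (lq + j + \<theta>)) powr (- m))^2"
  proof -
    have s: "(sqrt (K * 3 powr (2*a) * 2 powr E0))^2 = K * 3 powr (2*a) * 2 powr E0" using K by simp
    have "(sqrt (K * 3 powr (2*a) * 2 powr E0) * 2 powr (- \<alpha> / 4 * n) * (2 powr (lq + j + \<theta>)) powr (- m))^2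
        = (sqrt (K * 3 powr (2*a) * 2 powr E0))^2 * (2 powr (- \<alpha> / 4 * n))^2 * ((2 powr (lq + j + \<theta>)) powr (- m))^2"
      by (simp add: power_mult_distrib)
    also have "\<dots> = K * 3 powr (2*a) * (2 powr E0 * 2 powr (- \<alpha> / 2 * n) * 2 powr (-2*m*(lq + j + \<theta>)))"
      unfolding s by (simp add: powr_powr powr_power mult_ac)
    also have "2 powr E0 * 2 powr (- \<alpha> / 2 * n) * 2 powr (-2*m*(lq + j + \<theta>)) = 2 powr (E0 - \<alpha>/2 * n - 2*m*(lq + j + \<theta>))"
      by (simp add: powr_add[symmetric])
    finally show ?thesis by simp
  qed
  finally show ?thesis unfolding a_def n_def E0_def .
qed


lemma delta_meas_supp:
  fixes \<beta> :: "int \<Rightarrow> real^'n" and M :: "(real^'n) measure"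
  assumes b01: "\<And>j i. \<beta> j $ i \<in> {0, 1}"
    and sets_M: "sets M = sets borel"
    and b_meas: "\<And>Q. Q \<in> Dgrid \<beta> \<Longrightarrow> b Q \<in> borel_measurable M"
    and b_supp: "\<And>Q x. Q \<in> Dgrid \<beta> \<Longrightarrow> x \<notin> Q \<Longrightarrow> b Q x = 0"
    and Qs: "Qs \<in> Dgrid \<beta>" and Q: "Q \<in> Dgrid \<beta>" and QQs: "Q \<subseteq> Qs"
  shows "Delta \<beta> M b A p Qs Q f \<in> borel_measurable M"
    and "\<And>x. x \<notin> Q \<Longrightarrow> Delta \<beta> M b A p Qs Q f x = 0"
proof -
  define sp where "sp = stopparent \<beta> M b A p Qs"
  have ch: "Q' \<in> Dgrid \<beta> \<and> Q' \<subseteq> Q" if "Q' \<in> dchildren \<beta> Q" for Q'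
    using that unfolding dchildren_def by (auto intro: Dk_Dgrid)
  have bsp: "b (sp P) \<in> borel_measurable M" if "P \<in> Dgrid \<beta>" "P \<subseteq> Qs" for P
    unfolding sp_def by (rule b_meas[OF stopparent_Dgrid[where \<beta>=\<beta>, OF b01 Qs that]])
  have setsQ: "P \<in> sets M" if "P \<in> Dgrid \<beta>" for P
    using Dgrid_borel[OF that] sets_M by simp
  show "Delta \<beta> M b A p Qs Q f \<in> borel_measurable M"
    unfolding Delta_def sp_def[symmetric]
  proof (intro borel_measurable_add borel_measurable_sum)
    fix Q' assume Q': "Q' \<in> dchildren \<beta> Q"
    have [measurable]: "b (sp Q') \<in> borel_measurable M" "b (sp Q) \<in> borel_measurable M"
      using bsp ch[OF Q'] QQs Q by auto
    have [measurable]: "Q' \<in> sets M" using setsQ ch[OF Q'] by auto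
    show "(\<lambda>x. (avg M Q' f / avg M Q' (b (sp Q')) * b (sp Q') x - avg M Q f / avg M Q (b (sp Q)) * b (sp Q) x) * indicator Q' x) \<in> borel_measurable M"
      by measurable
  next
    have [measurable]: "b Qs \<in> borel_measurable M" using b_meas[OF Qs] .
    show "(\<lambda>x. if Q = Qs then avg M Qs f * b Qs x else 0) \<in> borel_measurable M" by measurable
  qed
  fix x assume x: "x \<notin> Q"
  have s0: "(\<Sum>Q' \<in> dchildren \<beta> Q.
        (avg M Q' f / avg M Q' (b (sp Q')) * b (sp Q') x - avg M Q f / avg M Q (b (sp Q)) * b (sp Q) x)
        * indicator Q' x) = 0"
  proof (rule sum.neutral, intro ballI)
    fix Q' assume "Q' \<in> dchildren \<beta> Q"
    hence "x \<notin> Q'" using ch x by blast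
    thus "(avg M Q' f / avg M Q' (b (sp Q')) * b (sp Q') x - avg M Q f / avg M Q (b (sp Q)) * b (sp Q) x)
        * indicator Q' x = 0" by simp
  qed
  moreover have "(if Q = Qs then avg M Qs f * b Qs x else 0) = 0"
    using b_supp[OF Qs] x by auto
  ultimately show "Delta \<beta> M b A p Qs Q f x = 0"
    unfolding Delta_def sp_def[symmetric] by simp
qed


theorem lemma4p2:
  fixes M :: "(real^'n) measure"
    and m lam \<alpha> \<gamma> p A C0 C1 :: real
    and r :: nat
    and s :: "real \<Rightarrow> real^'n \<Rightarrow> real^'n \<Rightarrow> complex"
    and \<beta> :: "int \<Rightarrow> real^'n"
    and b :: "(real^'n) set \<Rightarrow> real^'n \<Rightarrow> complex"
    and Qs :: "(real^'n) set"
  assumes sets_M: "sets M = sets borel"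
    and m_pos: "m > 0"
    and growth: "\<And>x \<rho>. \<rho> > 0 \<Longrightarrow> emeasure M (linf_ball x \<rho>) \<le> ennreal (C0 * \<rho> powr m)"
    and lam: "lam > 2"
    and alpha: "0 < \<alpha>" "\<alpha> \<le> m * (lam - 2) / 2"
    and s_meas: "\<And>t. t > 0 \<Longrightarrow> (\<lambda>w. s t (fst w) (snd w)) \<in> borel_measurable borel"
    and s_size: "\<And>t x y. t > 0 \<Longrightarrow> cmod (s t x y) \<le> C1 * t powr \<alpha> / (t + linf x y) powr (m + \<alpha>)"
    and s_holder: "\<And>t x y y'. t > 0 \<Longrightarrow> linf y y' < t / 2 \<Longrightarrow>
                     cmod (s t x y - s t x y') \<le> C1 * linf y y' powr \<alpha> / (t + linf x y) powr (m + \<alpha>)"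
    and beta01: "\<And>j i. \<beta> j $ i \<in> {0, 1}"
    and r_ge: "r \<ge> 1"
    and gamma: "0 < \<gamma>" "\<gamma> < 1/2" "\<gamma> \<le> \<alpha> / (2 * (m + \<alpha>))" "m * \<gamma> / (1 - \<gamma>) \<le> \<alpha> / 4"
    and p: "1 < p" "p \<le> 2"
    and b_meas: "\<And>Q. Q \<in> Dgrid \<beta> \<Longrightarrow> b Q \<in> borel_measurable M"
    and b_supp: "\<And>Q x. Q \<in> Dgrid \<beta> \<Longrightarrow> x \<notin> Q \<Longrightarrow> b Q x = 0"
    and b_avg: "\<And>Q. Q \<in> Dgrid \<beta> \<Longrightarrow> (\<integral>x\<in>Q. b Q x \<partial>M) = complex_of_real (measure M Q)"
    and b_Lp: "\<And>Q. Q \<in> Dgrid \<beta> \<Longrightarrow>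
                 (\<integral>\<^sup>+ x. ennreal (cmod (b Q x) powr p) \<partial>M) \<le> ennreal (A * measure M Q)"
    and Qs: "Qs \<in> Dgrid \<beta>"
  shows "\<exists>C. \<forall>Q R i j x t f.
     Q \<in> Dgrid \<beta> \<and> R \<in> Dgrid \<beta> \<and> Q \<subseteq> Qs \<and>
     side \<beta> Q = 2 ^ i * side \<beta> R \<and>
     setdist_inf Q R > side \<beta> R powr \<gamma> * side \<beta> Q powr (1 - \<gamma>) \<and>
     2 ^ j < longdist \<beta> Q R / side \<beta> Q \<and> longdist \<beta> Q R / side \<beta> Q \<le> 2 ^ (j + 1) \<and>
     x \<in> R \<and> side \<beta> R / 2 < t \<and> t \<le> side \<beta> R \<and>
     f \<in> borel_measurable M \<and> (\<forall>K. compact K \<longrightarrow> set_integrable M K f)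
     \<longrightarrow>
     (\<integral>\<^sup>+ y. ennreal ((cmod (theta_op M s t (Delta \<beta> M b A p Qs Q f) y))\<^sup>2
                 * (t / (t + linf x y)) powr (m * lam) / t powr m) \<partial>M)
       \<le> (ennreal (C * 2 powr (- \<alpha> / 4 * real (i + j))
              * side \<beta> (danc \<beta> Q (int j + thetafun \<gamma> r (i + j))) powr (- m))
          * (\<integral>\<^sup>+ z. ennreal (cmod (Delta \<beta> M b A p Qs Q f z)) \<partial>M))\<^sup>2"
proof -
  define KZ where "KZ = C1^2 * (2 powr (2*(m+\<alpha>)) * WC C0 m (m*lam) + 2 powr (m*lam) * WC C0 m (2*(m+\<alpha>)))"
  have mlam: "m < m * lam" using m_pos lam by (simp add: mult_less_cancel_left_pos[of m 1 lam, simplified])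
  have KZ0: "KZ \<ge> 0" unfolding KZ_def
    using WC_nonneg[OF mlam, of C0] WC_nonneg[of m "2*(m+\<alpha>)" C0] m_pos alpha by simp
  define C where "C = sqrt (KZ * 3 powr (2*(m+\<alpha>)) * 2 powr (4*m*r + 2*m))"
  have Cnn: "C \<ge> 0" unfolding C_def using KZ0 by simp
  have sp: "space M = UNIV" using sets_eq_imp_space_eq[OF sets_M] by simp
  have sf: "sigma_finite_measure M"
  proof (rule sigma_finite_measure.intro, rule exI[of _ "range (\<lambda>n::nat. linf_ball (0::real^'n) (real n + 1))"], intro conjI)
    show "countable (range (\<lambda>n::nat. linf_ball (0::real^'n) (real n + 1)))" by simp
    show "range (\<lambda>n::nat. linf_ball (0::real^'n) (real n + 1)) \<subseteq> sets M" using linf_ball_borel sets_M by auto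
    have "y \<in> linf_ball (0::real^'n) (real (nat \<lceil>linf 0 y\<rceil>) + 1)" for y :: "real^'n"
      unfolding linf_ball_def using real_nat_ceiling_ge[of "linf 0 y"] by simp
    thus "\<Union> (range (\<lambda>n::nat. linf_ball (0::real^'n) (real n + 1))) = space M" using sp by auto
    show "\<forall>a\<in>range (\<lambda>n::nat. linf_ball (0::real^'n) (real n + 1)). emeasure M a \<noteq> \<infinity>"
    proof
      fix a assume "a \<in> range (\<lambda>n::nat. linf_ball (0::real^'n) (real n + 1))"
      then obtain n :: nat where a: "a = linf_ball (0::real^'n) (real n + 1)" by blast
      have "emeasure M a \<le> ennreal (C0 * (real n + 1) powr m)" unfolding a by (rule growth) simp
      from neq_top_trans[OF ennreal_neq_top this] show "emeasure M a \<noteq> \<infinity>" by simp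
    qed
  qed
  have setsMM: "sets (M \<Otimes>\<^sub>M M) = sets (borel :: ((real^'n) \<times> (real^'n)) measure)"
  proof -
    have "sets (M \<Otimes>\<^sub>M M) = sets (borel \<Otimes>\<^sub>M borel :: ((real^'n) \<times> (real^'n)) measure)"
      by (rule sets_pair_measure_cong[OF sets_M sets_M])
    thus ?thesis by (metis borel_prod)
  qed
  show ?thesis
  proof (rule exI[of _ C], intro allI impI)
    fix Q R :: "(real^'n) set" and i j :: nat and x :: "real^'n" and t :: real and f :: "real^'n \<Rightarrow> complex"
    assume H: "Q \<in> Dgrid \<beta> \<and> R \<in> Dgrid \<beta> \<and> Q \<subseteq> Qs \<and>      side \<beta> Q = 2 ^ i * side \<beta> R \<and>      setdist_inf Q R > side \<beta> R powr \<gamma> * side \<beta> Q powr (1 - \<gamma>) \<and>      2 ^ j < longdist \<beta> Q R / side \<beta> Q \<and> longdist \<beta> Q R / side \<beta> Q \<le> 2 ^ (j + 1) \<and>      x \<in> R \<and> side \<beta> R / 2 < t \<and> t \<le> side \<beta> R \<and>      f \<in> borel_measurable M \<and> (\<forall>K. compact K \<longrightarrow> set_integrable M K f)"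
    have Q: "Q \<in> Dgrid \<beta>" and QQs: "Q \<subseteq> Qs" and sQR: "side \<beta> Q = 2 ^ i * side \<beta> R"
      and hd: "setdist_inf Q R > side \<beta> R powr \<gamma> * side \<beta> Q powr (1 - \<gamma>)"
      and hj: "2 ^ j < longdist \<beta> Q R / side \<beta> Q"
      and t1: "side \<beta> R / 2 < t" and t2: "t \<le> side \<beta> R"
      using H by auto
    define kq where "kq = dlev \<beta> Q"
    have Qk: "Q \<in> Dk \<beta> kq" using Dgrid_Dk[OF Q] kq_def by simp
    define L where "L = side \<beta> Q"
    have L: "L = 2 powr real_of_int kq" using Dk_side[OF Qk] L_def by simp
    have Lpos: "L > 0" using L by simp
    define sR where "sR = side \<beta> R"
    have p2i: "(2::real) ^ i = 2 powr real i" by (simp add: powr_realpow)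
    have sR: "sR = L * 2 powr (- real i)"
      using sQR unfolding L_def[symmetric] sR_def[symmetric] p2i by (simp add: powr_minus field_simps)
    have sRpos: "sR > 0" using sR Lpos by simp
    have tpos: "t > 0" using t1 sRpos sR_def by simp
    define d where "d = setdist_inf Q R"
    have dz: "d \<le> linf x z" if "z \<in> Q" for z
    proof -
      have xR: "x \<in> R" using H by auto
      have "d \<le> linf z x" unfolding d_def setdist_inf_def
      proof (rule cInf_lower)
        show "linf z x \<in> {linf x y |x y. x \<in> Q \<and> y \<in> R}" using that xR by blast
        show "bdd_below {linf x y |x y. x \<in> Q \<and> y \<in> R}"
          by (rule bdd_belowI[of _ 0]) (auto simp: linf_nonneg)
      qed
      thus ?thesis by (simp add: linf_sym)
    qed
    define u where "u = 2 powr (- (real i * \<gamma>))"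
    have ig: "real i * \<gamma> \<ge> 0" using gamma by simp
    have u: "0 < u" "u \<le> 1" unfolding u_def using powr_mono[of "-(real i*\<gamma>)" 0 2] ig by auto
    have "sR powr \<gamma> * L powr (1 - \<gamma>) = L * u"
    proof -
      have "sR powr \<gamma> = L powr \<gamma> * u" unfolding sR u_def using Lpos
        by (simp add: powr_mult powr_powr)
      moreover have "L powr \<gamma> * L powr (1 - \<gamma>) = L" using Lpos by (simp add: powr_add[symmetric])
      ultimately show ?thesis by (simp add: mult_ac)
    qed
    hence hd': "L * u < d" using hd unfolding d_def sR_def L_def by simp
    have sRu: "sR \<le> L * u"
    proof -
      have "2 powr (- real i) \<le> (2::real) powr (- (real i * \<gamma>))"
      proof (rule powr_mono)
        have "real i * \<gamma> \<le> real i * 1" using gamma by (intro mult_left_mono) auto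
        thus "- real i \<le> - (real i * \<gamma>)" by simp
      qed simp
      thus ?thesis unfolding sR u_def using Lpos by simp
    qed
    have td: "t \<le> d" using t2 sRu hd' sR_def by linarith
    have ld: "longdist \<beta> Q R = L + sR + d" unfolding longdist_def L_def sR_def d_def by simp
    have hj': "2^j * L < L + sR + d" using hj Lpos unfolding ld L_def[symmetric] by (simp add: divide_simps)
    have e2: "2 powr (real j + real_of_int kq - real i * \<gamma>) = 2^j * L * u"
    proof -
      have "2 powr (real j + real_of_int kq - real i * \<gamma>) = 2 powr (real j) * 2 powr (real_of_int kq) * 2 powr (- (real i * \<gamma>))"
        by (simp only: powr_add[symmetric] diff_conv_add_uminus)
      also have "(2::real) powr (real j) = 2^j" by (rule powr_realpow) simp
      finally show ?thesis unfolding L u_def .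
    qed
    have Lu: "L * u \<le> L" using u Lpos by (simp add: mult_le_cancel_left1)
    have dlow: "2 powr (real j + real_of_int kq - real i * \<gamma>) / 3 \<le> d"
    proof (cases "d \<ge> L")
      case True
      have "2^j * L * u \<le> 2^j * L" using u Lpos by (simp add: mult_le_cancel_left1)
      also have "\<dots> \<le> 3 * d" using hj' True sRu Lu by linarith
      finally show ?thesis unfolding e2 by simp
    next
      case False
      have "2^j * L < 3 * L" using hj' False sRu Lu by linarith
      hence "(2::real)^j < 3" using Lpos by simp
      hence "2^j * (L * u) \<le> 3 * (L * u)" using Lpos u by (intro mult_right_mono) auto
      also have "\<dots> \<le> 3 * d" using hd' by simp
      finally show ?thesis unfolding e2 by (simp add: mult_ac)
    qed
    define g where "g = Delta \<beta> M b A p Qs Q f"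
    have gm: "g \<in> borel_measurable M" and gs: "\<And>z. z \<notin> Q \<Longrightarrow> g z = 0"
      unfolding g_def using delta_meas_supp[where \<beta>=\<beta>, OF beta01 sets_M b_meas b_supp Qs Q QQs] by auto
    define B where "B = KZ * t powr (2*\<alpha>) * d powr (-(2*(m+\<alpha>)))"
    have sm2: "(\<lambda>w. s t (fst w) (snd w)) \<in> borel_measurable (borel \<Otimes>\<^sub>M borel :: ((real^'n) \<times> (real^'n)) measure)"
      using s_meas[OF tpos] by (metis borel_prod)
    have kmM: "(\<lambda>w. s t (fst w) (snd w)) \<in> borel_measurable (M \<Otimes>\<^sub>M M)"
      using s_meas[OF tpos] unfolding measurable_cong_sets[OF setsMM refl] .
    have bnd: "(\<integral>\<^sup>+ y. ennreal ((cmod (s t y z))^2 * ((t / (t + linf x y)) powr (m * lam) / t powr m)) \<partial>M) \<le> ennreal B"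
      if "z \<in> Q" for z
    proof -
      have km1: "(\<lambda>y. s t y z) \<in> borel_measurable borel"
        using measurable_Pair1[OF sm2, of z] by simp
      have "(\<integral>\<^sup>+ y. ennreal ((cmod (s t y z))^2 * (t / (t + linf x y)) powr (m * lam) / t powr m) \<partial>M) \<le> ennreal B"
        unfolding B_def KZ_def
        by (rule kernel_z[OF sets_M growth m_pos lam alpha km1 s_size[OF tpos] tpos td dz[OF that]])
      thus ?thesis by (simp add: times_divide_eq_right)
    qed
    have W0: "\<And>y. 0 \<le> (t / (t + linf x y)) powr (m * lam) / t powr m" by simp
    have lmM: "(\<lambda>y. linf x y) \<in> borel_measurable M"
      unfolding measurable_cong_sets[OF sets_M refl] by (rule linf_meas) auto
    have Wm: "(\<lambda>y. (t / (t + linf x y)) powr (m * lam) / t powr m) \<in> borel_measurable M"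
      using lmM by measurable
    have CORE: "(\<integral>\<^sup>+ y. ennreal ((cmod (\<integral> z. s t y z * g z \<partial>M))^2 * ((t / (t + linf x y)) powr (m * lam) / t powr m)) \<partial>M)
          \<le> ennreal B * (\<integral>\<^sup>+ z. ennreal (cmod (g z)) \<partial>M)^2"
      by (rule core[OF sf sp gm kmM Wm W0 gs bnd])
    define N where "N = (\<integral>\<^sup>+ z. ennreal (cmod (g z)) \<partial>M)"
    define TH where "TH = thetafun \<gamma> r (i + j)"
    have "0 \<le> (real (i + j) * \<gamma> + real r) / (1 - \<gamma>)" using gamma by simp
    hence TH0: "TH \<ge> 0" unfolding TH_def thetafun_def by linarith
    have sS: "side \<beta> (danc \<beta> Q (int j + TH)) = 2 powr (real_of_int kq + real j + real_of_int TH)"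
      using danc_side[where \<beta>=\<beta>, OF beta01 Qk, of "int j + TH"] TH0 by (simp add: add_ac)
    have thb: "real_of_int TH \<le> (real (i + j) * \<gamma> + real r) / (1 - \<gamma>) + 1"
      unfolding TH_def thetafun_def by (rule of_int_ceiling_le_add_one)
    have AR: "B \<le> (C * 2 powr (- \<alpha> / 4 * real (i + j)) * side \<beta> (danc \<beta> Q (int j + TH)) powr (- m))^2"
      unfolding B_def C_def sS
      by (rule arith_bound[OF m_pos alpha(1) gamma(1,2,3,4) KZ0 tpos _ dlow]) (use t2 sR sR_def L thb in \<open>simp_all add: powr_add[symmetric]\<close>)
    have X0: "C * 2 powr (- \<alpha> / 4 * real (i + j)) * side \<beta> (danc \<beta> Q (int j + TH)) powr (- m) \<ge> 0"
      using Cnn by simp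
    have "(\<integral>\<^sup>+ y. ennreal ((cmod (theta_op M s t g y))\<^sup>2 * (t / (t + linf x y)) powr (m * lam) / t powr m) \<partial>M)
        \<le> ennreal B * N^2"
      using CORE unfolding theta_op_def N_def by (simp add: times_divide_eq_right)
    also have "\<dots> \<le> ennreal ((C * 2 powr (- \<alpha> / 4 * real (i + j)) * side \<beta> (danc \<beta> Q (int j + TH)) powr (- m))^2) * N^2"
      by (intro mult_right_mono ennreal_leI AR) simp
    also have "\<dots> = (ennreal (C * 2 powr (- \<alpha> / 4 * real (i + j)) * side \<beta> (danc \<beta> Q (int j + TH)) powr (- m)) * N)^2"
      using X0 by (simp add: ennreal_power power_mult_distrib)
    finally show "(\<integral>\<^sup>+ y. ennreal ((cmod (theta_op M s t (Delta \<beta> M b A p Qs Q f) y))\<^sup>2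
                 * (t / (t + linf x y)) powr (m * lam) / t powr m) \<partial>M)
       \<le> (ennreal (C * 2 powr (- \<alpha> / 4 * real (i + j))
              * side \<beta> (danc \<beta> Q (int j + thetafun \<gamma> r (i + j))) powr (- m))
          * (\<integral>\<^sup>+ z. ennreal (cmod (Delta \<beta> M b A p Qs Q f z)) \<partial>M))\<^sup>2"
      unfolding g_def N_def TH_def .
  qed
qed

end
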